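(* Let $k$ be a positive integer and $\varrho\ge0$, and define the multiple Dirichlet series \[F_{k,\varrho}(s_1,\dots,s_{2k})=\sum_{\substack{n_1\cdots n_k=n_{k+1}\cdots n_{2k}\\ n_j\ge1}}\frac{\varrho^{\Omega(n_1)}\cdots\varrho^{\Omega(n_{2k})}}{n_1^{1/2+s_1}\cdots n_{2k}^{1/2+s_{2k}}}.\] Fix $\delta>0$. Uniformly for $0\le\varrho\le\sqrt{2-\delta}$ and $0<\sigma\le1/\log k$ it holds that \[|F_{k,\varrho}(\underline{s})|\le\exp\Big(-k^2\varrho^2\big(\log 2\sigma+\log\log(k^2\varrho^2)+O_\delta(1)\big)\Big)\] whenever $s_\ell=\sigma+it_\ell$ with $t_\ell\in\mathbb{R}$ for $1\le\ell\le 2k$.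
   Context: $\Omega(n)$ is the number of prime factors of $n$ counted with multiplicity. The paper assumes throughout that $k$ (and $k\varrho$) is large enough for the iterated logarithms to be positive. *)

theory Defs
  imports "HOL-Analysis.Analysis" "HOL-Computational_Algebra.Primes"
begin

definition bigOmega :: "nat \<Rightarrow> nat" where
  "bigOmega n = size (prime_factorization n)"

text \<open>Index set of the multiple Dirichlet series: tuples (n_0,...,n_{2k-1}) of positive
  integers with n_0 ... n_{k-1} = n_k ... n_{2k-1}; encoded as functions nat => nat that
  vanish outside {0..<2k}.\<close>
definition tuples :: "nat \<Rightarrow> (nat \<Rightarrow> nat) set" where
  "tuples k = {n. (\<forall>j<2*k. 1 \<le> n j) \<and> (\<forall>j\<ge>2*k. n j = 0) \<and>
                  (\<Prod>j<k. n j) = (\<Prod>j\<in>{k..<2*k}. n j)}"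

definition F :: "nat \<Rightarrow> real \<Rightarrow> (nat \<Rightarrow> complex) \<Rightarrow> complex" where
  "F k \<rho> s = (\<Sum>\<^sub>\<infinity>n\<in>tuples k.
      \<Prod>j<2*k. complex_of_real (\<rho> ^ bigOmega (n j)) / (of_nat (n j)) powr (1/2 + s j))"

end

theory Submission
  imports Defs
begin


lemma sqrt_sum_bound: "(\<Sum>n\<in>{1..M}. 1 / sqrt (real n)) \<le> 2 * sqrt (real M)"
proof (induction M)
  case 0
  then show ?case by simp
next
  case (Suc M)
  have key: "1 / sqrt (real (Suc M)) \<le> 2 * sqrt (real (Suc M)) - 2 * sqrt (real M)"
  proof -
    have a: "sqrt (real M) \<le> sqrt (real (Suc M))" by simp
    have b: "0 < sqrt (real (Suc M))" by simp
    have "(sqrt (real (Suc M)) - sqrt (real M)) * (sqrt (real (Suc M)) + sqrt (real M)) = 1"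
      by (simp add: algebra_simps)
    then have "1 \<le> (sqrt (real (Suc M)) - sqrt (real M)) * (2 * sqrt (real (Suc M)))"
      using a b by (smt (verit, best) mult_left_mono real_sqrt_ge_zero of_nat_0_le_iff)
    then show ?thesis using b by (simp add: field_simps)
  qed
  have "(\<Sum>n\<in>{1..Suc M}. 1 / sqrt (real n)) = (\<Sum>n\<in>{1..M}. 1 / sqrt (real n)) + 1 / sqrt (real (Suc M))"
    by simp
  then show ?case using Suc key by linarith
qed

lemma tail_bound:
  assumes "1 \<le> M" "M \<le> L"
  shows "(\<Sum>n\<in>{Suc M..L}. 1 / (real n * sqrt (real n))) \<le> 2 / sqrt (real M) - 2 / sqrt (real L)"
  using assms(2)
proof (induction L)
  case 0
  then show ?case using assms by simp
next
  case (Suc L)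
  show ?case
  proof (cases "M = Suc L")
    case True
    then show ?thesis by simp
  next
    case False
    then have hML: "M \<le> L" using Suc by simp
    have L1: "1 \<le> L" using hML assms by simp
    have key: "1 / (real (Suc L) * sqrt (real (Suc L))) \<le> 2 / sqrt (real L) - 2 / sqrt (real (Suc L))"
    proof -
      define a where "a = sqrt (real L)"
      define b where "b = sqrt (real (Suc L))"
      have a0: "0 < a" using L1 by (simp add: a_def)
      have ab: "a \<le> b" by (simp add: a_def b_def)
      have prod: "(b - a) * (b + a) = 1" using a0 by (simp add: a_def b_def algebra_simps)
      have ba: "b - a = 1 / (b + a)" using prod a0 ab by (simp add: field_simps)
      have "2 / a - 2 / b = 2 * (b - a) / (a * b)" using a0 ab by (simp add: field_simps)
      also have "\<dots> = 2 / ((b + a) * (a * b))" by (simp add: ba)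
      also have "\<dots> \<ge> 2 / ((2*b) * (b * b))"
      proof -
        have d: "(b + a) * (a * b) \<le> 2 * b * (b * b)"
          using a0 ab by (intro mult_mono) (auto intro!: mult_right_mono)
        have p: "0 < (b + a) * (a * b)" using a0 ab by (intro mult_pos_pos) auto
        show ?thesis using d p by (intro frac_le) auto
      qed
      finally have "2 / a - 2 / b \<ge> 1 / (b * b * b)" by (simp add: mult.assoc)
      moreover have "1 / (real (Suc L) * sqrt (real (Suc L))) = 1 / (b * b * b)"
        unfolding b_def by (subst real_sqrt_mult_self) auto
      moreover have "2 / sqrt (real L) - 2 / sqrt (real (Suc L)) = 2 / a - 2 / b"
        by (simp add: a_def b_def)
      ultimately show ?thesis by simp
    qed
    have "(\<Sum>n\<in>{Suc M..Suc L}. 1 / (real n * sqrt (real n))) = (\<Sum>n\<in>{Suc M..L}. 1 / (real n * sqrt (real n))) + 1 / (real (Suc L) * sqrt (real (Suc L)))"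
      using hML by simp
    then show ?thesis using Suc.IH[OF hML] key by linarith
  qed
qed

lemma zeta_bound:
  assumes "s > 1"
  shows "(\<Sum>n\<in>{1..M}. real n powr (-s)) \<le> 1 + 1 / (s - 1)"
proof -
  have main: "(\<Sum>n\<in>{1..M}. real n powr (-s)) \<le> 1 + (1 - real M powr (1 - s)) / (s - 1)" if "M \<ge> 1" for M
    using that
  proof (induction M)
    case 0
    then show ?case by simp
  next
    case (Suc M)
    show ?case
    proof (cases "M = 0")
      case True
      then show ?thesis by simp
    next
      case False
      have M1: "real M \<ge> 1" using False by simp
      have "\<exists>z. real M < z \<and> z < real (Suc M) \<and>
          (real (Suc M) powr (1 - s) - real M powr (1 - s) = (real (Suc M) - real M) * ((1 - s) * z powr (1 - s - 1)))"
        apply (rule MVT2)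
         apply simp
        using M1 by (auto intro!: derivative_eq_intros)
      then obtain z where z: "real M < z" "z < real (Suc M)"
        "real (Suc M) powr (1 - s) - real M powr (1 - s) = (1 - s) * z powr (1 - s - 1)"
        by auto
      have zs: "z powr (1 - s - 1) = z powr (-s)" by simp
      have "z powr (-s) \<ge> real (Suc M) powr (-s)"
        using z M1 assms by (intro powr_mono2') auto
      then have "(s-1) * real (Suc M) powr (-s) \<le> (s-1) * z powr (-s)"
        using assms by (intro mult_left_mono) auto
      also have "(s-1) * z powr (-s) = real M powr (1 - s) - real (Suc M) powr (1 - s)"
        using z(3) unfolding zs by (simp add: algebra_simps)
      finally have key: "real (Suc M) powr (-s) \<le> (real M powr (1 - s) - real (Suc M) powr (1 - s)) / (s - 1)"
        using assms by (simp add: pos_le_divide_eq mult.commute)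
      have "(\<Sum>n\<in>{1..Suc M}. real n powr (-s)) = (\<Sum>n\<in>{1..M}. real n powr (-s)) + real (Suc M) powr (-s)"
        by simp
      also have "\<dots> \<le> 1 + (1 - real M powr (1 - s)) / (s - 1) + (real M powr (1 - s) - real (Suc M) powr (1 - s)) / (s - 1)"
        using Suc.IH False key by simp
      also have "\<dots> = 1 + (1 - real (Suc M) powr (1 - s)) / (s - 1)"
        using assms by (simp add: diff_divide_distrib)
      finally show ?thesis .
    qed
  qed
  have le: "(1 - real M powr (1 - s)) / (s - 1) \<le> 1 / (s - 1)"
    using assms by (intro divide_right_mono) auto
  show ?thesis
  proof (cases "M = 0")
    case True
    then show ?thesis using assms by simp
  next
    case False
    then show ?thesis using main[of M] le by simp
  qed
qed



lemma Omega_sum: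
  fixes n :: nat
  assumes "n > 0" "finite Q" "prime_factors n \<subseteq> Q" "\<And>p. p \<in> Q \<Longrightarrow> prime p"
  shows "bigOmega n = (\<Sum>p\<in>Q. multiplicity p n)"
proof -
  have "bigOmega n = (\<Sum>p\<in>prime_factors n. count (prime_factorization n) p)"
    unfolding bigOmega_def by (simp add: size_multiset_overloaded_eq)
  also have "\<dots> = (\<Sum>p\<in>prime_factors n. multiplicity p n)"
    by (intro sum.cong) (auto simp: count_prime_factorization_prime in_prime_factors_imp_prime)
  also have "\<dots> = (\<Sum>p\<in>Q. multiplicity p n)"
  proof (rule sum.mono_neutral_left[OF assms(2) assms(3)])
    show "\<forall>i\<in>Q - prime_factors n. multiplicity i n = 0"
      using assms(1,4) by (auto simp: prime_factors_multiplicity)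
  qed
  finally show ?thesis .
qed

lemma factor_repr:
  fixes n :: nat
  assumes "n > 0" "finite Q" "prime_factors n \<subseteq> Q" "\<And>p. p \<in> Q \<Longrightarrow> prime p"
  shows "(\<Prod>p\<in>Q. p ^ multiplicity p n) = n"
proof -
  have "(\<Prod>p\<in>Q. p ^ multiplicity p n) = (\<Prod>p\<in>prime_factors n. p ^ multiplicity p n)"
  proof (rule prod.mono_neutral_right[OF assms(2) assms(3)])
    show "\<forall>i\<in>Q - prime_factors n. i ^ multiplicity i n = 1"
      using assms(1,4) by (auto simp: prime_factors_multiplicity)
  qed
  also have "\<dots> = n" using assms(1) by (simp add: prod_prime_factors)
  finally show ?thesis .
qed

lemma pow_powr_nat:
  assumes "p > 0"
  shows "(real p powr a) ^ n = real (p ^ n) powr a"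
  using assms by (simp add: powr_power powr_realpow[symmetric] powr_powr mult.commute)

lemma prod_pow_powr:
  assumes "finite Q" "\<And>p. p \<in> Q \<Longrightarrow> p > 0"
  shows "(\<Prod>p\<in>Q. (real p powr a) ^ e p) = real (\<Prod>p\<in>Q. p ^ e p) powr a"
proof -
  have "(\<Prod>p\<in>Q. (real p powr a) ^ e p) = (\<Prod>p\<in>Q. real (p ^ e p) powr a)"
    using assms by (intro prod.cong) (auto simp: pow_powr_nat)
  also have "\<dots> = (\<Prod>p\<in>Q. real (p ^ e p)) powr a" by (simp add: prod_powr_distrib)
  also have "\<dots> = real (\<Prod>p\<in>Q. p ^ e p) powr a" by simp
  finally show ?thesis .
qed

lemma pp_inj:
  fixes Q :: "nat set"
  assumes "finite Q" "\<And>p. p \<in> Q \<Longrightarrow> prime p"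
  shows "inj_on (\<lambda>e. \<Prod>p\<in>Q. p ^ e p) (PiE Q S)"
proof (rule inj_onI)
  fix e e' assume e: "e \<in> PiE Q S" and e': "e' \<in> PiE Q S"
    and eq: "(\<Prod>p\<in>Q. p ^ e p) = (\<Prod>p\<in>Q. p ^ e' p)"
  show "e = e'"
  proof (rule PiE_ext[OF e e'])
    fix p assume p: "p \<in> Q"
    have "e p = multiplicity p (\<Prod>p\<in>Q. p ^ e p)"
      using multiplicity_prod_prime_powers[OF assms, of p e] p assms(2) by simp
    also have "\<dots> = e' p"
      using multiplicity_prod_prime_powers[OF assms, of p e'] p assms(2) eq by simp
    finally show "e p = e' p" .
  qed
qed

lemma mult_le_self:
  fixes n p :: nat
  assumes "n > 0" "prime p"
  shows "multiplicity p n \<le> n"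
proof -
  let ?m = "multiplicity p n"
  have "?m < 2 ^ ?m" by (rule less_exp)
  also have "(2::nat) ^ ?m \<le> p ^ ?m" using prime_ge_2_nat[OF assms(2)] by (intro power_mono) auto
  also have "p ^ ?m \<le> n" using assms(1) by (intro dvd_imp_le multiplicity_dvd) auto
  finally show ?thesis by simp
qed

lemma euler_upper:
  fixes Q :: "nat set" and A :: "nat \<Rightarrow> nat"
  assumes Q: "finite Q" "\<And>p. p \<in> Q \<Longrightarrow> prime p" and s: "s > 1"
  shows "(\<Prod>p\<in>Q. \<Sum>a\<in>{0..A p}. (real p powr (-s)) ^ a) \<le> 1 + 1 / (s - 1)"
proof -
  let ?pp = "\<lambda>e. \<Prod>p\<in>Q. p ^ e p"
  let ?E = "PiE Q (\<lambda>p. {0..A p})"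
  have pos: "\<And>p. p \<in> Q \<Longrightarrow> p > 0" using Q(2) prime_gt_0_nat by blast
  have "(\<Prod>p\<in>Q. \<Sum>a\<in>{0..A p}. (real p powr (-s)) ^ a) = (\<Sum>e\<in>?E. \<Prod>p\<in>Q. (real p powr (-s)) ^ e p)"
    using Q by (subst prod_sum_PiE) auto
  also have "\<dots> = (\<Sum>e\<in>?E. real (?pp e) powr (-s))"
    using Q pos by (intro sum.cong refl prod_pow_powr) auto
  also have "\<dots> = (\<Sum>m\<in>?pp ` ?E. real m powr (-s))"
    using pp_inj[OF Q, of "\<lambda>p. {0..A p}"] by (simp add: sum.reindex)
  also have "\<dots> \<le> (\<Sum>m\<in>{1..(\<Sum>m\<in>?pp ` ?E. m)}. real m powr (-s))"
  proof (rule sum_mono2)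
    have fin: "finite (?pp ` ?E)" using Q by (auto intro!: finite_PiE)
    show "?pp ` ?E \<subseteq> {1..(\<Sum>m\<in>?pp ` ?E. m)}"
    proof
      fix m assume m: "m \<in> ?pp ` ?E"
      have "m > 0" using m pos by (auto intro!: prod_pos)
      moreover have "m \<le> (\<Sum>m\<in>?pp ` ?E. m)" using m fin by (intro member_le_sum) auto
      ultimately show "m \<in> {1..(\<Sum>m\<in>?pp ` ?E. m)}" by auto
    qed
  qed auto
  also have "\<dots> \<le> 1 + 1 / (s - 1)" using zeta_bound[OF s] .
  finally show ?thesis .
qed

lemma euler_lower:
  fixes y A :: nat
  assumes "y \<le> A"
  shows "(\<Sum>n\<in>{1..y}. real n powr (-s)) \<le> (\<Prod>p\<in>{p. prime p \<and> p \<le> y}. \<Sum>a\<in>{0..A}. (real p powr (-s)) ^ a)"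
proof -
  define Q where "Q = {p::nat. prime p \<and> p \<le> y}"
  have Q: "finite Q" "\<And>p. p \<in> Q \<Longrightarrow> prime p" unfolding Q_def by auto
  let ?pp = "\<lambda>e. \<Prod>p\<in>Q. p ^ e p"
  let ?E = "PiE Q (\<lambda>p. {0..A})"
  define \<phi> where "\<phi> n = (\<lambda>p\<in>Q. multiplicity p n)" for n :: nat
  have pos: "\<And>p. p \<in> Q \<Longrightarrow> p > 0" using Q(2) prime_gt_0_nat by blast
  have ppphi: "?pp (\<phi> n) = n" if n: "n \<in> {1..y}" for n
  proof -
    have "?pp (\<phi> n) = (\<Prod>p\<in>Q. p ^ multiplicity p n)" by (simp add: \<phi>_def)
    also have "\<dots> = n"
    proof (rule factor_repr[OF _ Q(1) _ Q(2)])
      show "0 < n" using n by simp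
      show "prime_factors n \<subseteq> Q"
      proof
        fix p assume p: "p \<in> prime_factors n"
        then have "p \<le> n" using n by (intro dvd_imp_le) (auto simp: in_prime_factors_iff)
        then show "p \<in> Q" using p n by (auto simp: Q_def in_prime_factors_iff)
      qed
    qed auto
    finally show ?thesis .
  qed
  have phiE: "\<phi> n \<in> ?E" if n: "n \<in> {1..y}" for n
    using n assms mult_le_self[of n] Q(2) unfolding \<phi>_def
    by (auto simp: PiE_iff) (meson le_trans)
  have inj: "inj_on \<phi> {1..y}" by (rule inj_on_inverseI[where g = ?pp]) (use ppphi in auto)
  have "(\<Sum>n\<in>{1..y}. real n powr (-s)) = (\<Sum>n\<in>{1..y}. real (?pp (\<phi> n)) powr (-s))"
    using ppphi by (intro sum.cong) auto
  also have "\<dots> = (\<Sum>e\<in>\<phi> ` {1..y}. real (?pp e) powr (-s))"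
    using inj by (simp add: sum.reindex)
  also have "\<dots> \<le> (\<Sum>e\<in>?E. real (?pp e) powr (-s))"
  proof (rule sum_mono2)
    show "\<phi> ` {1..y} \<subseteq> ?E" using phiE by blast
    show "finite ?E" using Q by (auto intro!: finite_PiE)
  qed auto
  also have "\<dots> = (\<Sum>e\<in>?E. \<Prod>p\<in>Q. (real p powr (-s)) ^ e p)"
    using Q pos by (intro sum.cong refl prod_pow_powr[symmetric]) auto
  also have "\<dots> = (\<Prod>p\<in>Q. \<Sum>a\<in>{0..A}. (real p powr (-s)) ^ a)"
    using Q by (subst prod_sum_PiE) auto
  finally show ?thesis by (simp add: Q_def)
qed



lemma G_eq:
  "(\<Sum>e\<in>PiE {..<k} (\<lambda>_. {0..N}). (x::real) ^ sum e {..<k}) = (\<Sum>b\<in>{0..N}. x ^ b) ^ k"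
proof -
  have "(\<Sum>e\<in>PiE {..<k} (\<lambda>_. {0..N}). x ^ sum e {..<k}) = (\<Sum>e\<in>PiE {..<k} (\<lambda>_. {0..N}). \<Prod>j<k. x ^ e j)"
    by (simp add: power_sum)
  also have "\<dots> = (\<Prod>j<k. \<Sum>b\<in>{0..N}. x ^ b)"
    by (subst prod_sum_PiE) auto
  also have "\<dots> = (\<Sum>b\<in>{0..N}. x ^ b) ^ k" by simp
  finally show ?thesis .
qed

lemma sq_sum_prod:
  "(\<Sum>(e1,e2)\<in>A \<times> A. f e1 * f e2) = (sum f A :: real) ^ 2"
  by (simp add: power2_eq_square sum_product sum.cartesian_product)

lemma L_le1:
  assumes "0 \<le> (x::real)"
  shows "(\<Sum>(e1,e2)\<in>{(e1,e2) \<in> PiE {..<k} (\<lambda>_. {0..N}) \<times> PiE {..<k} (\<lambda>_. {0..N}). sum e1 {..<k} = sum e2 {..<k}}.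
            x ^ sum e1 {..<k} * x ^ sum e2 {..<k}) \<le> ((\<Sum>b\<in>{0..N}. x ^ b) ^ k) ^ 2"
proof -
  let ?D = "PiE {..<k} (\<lambda>_. {0..N})"
  have "(\<Sum>(e1,e2)\<in>{(e1,e2) \<in> ?D \<times> ?D. sum e1 {..<k} = sum e2 {..<k}}. x ^ sum e1 {..<k} * x ^ sum e2 {..<k})
      \<le> (\<Sum>(e1,e2)\<in>?D \<times> ?D. x ^ sum e1 {..<k} * x ^ sum e2 {..<k})"
  proof (rule sum_mono2)
    show "finite (?D \<times> ?D)" by (auto intro!: finite_PiE)
    show "{(e1,e2) \<in> ?D \<times> ?D. sum e1 {..<k} = sum e2 {..<k}} \<subseteq> ?D \<times> ?D" by blast
    show "\<And>b. b \<in> ?D \<times> ?D - {(e1,e2) \<in> ?D \<times> ?D. sum e1 {..<k} = sum e2 {..<k}} \<Longrightarrow>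
      0 \<le> (case b of (e1,e2) \<Rightarrow> x ^ sum e1 {..<k} * x ^ sum e2 {..<k})"
      using assms by (auto split: prod.splits)
  qed
  also have "\<dots> = ((\<Sum>b\<in>{0..N}. x ^ b) ^ k) ^ 2"
    by (subst sq_sum_prod) (simp add: G_eq)
  finally show ?thesis .
qed

lemma L_le2:
  assumes "0 \<le> (x::real)"
  shows "(\<Sum>(e1,e2)\<in>{(e1,e2) \<in> PiE {..<k} (\<lambda>_. {0..N}) \<times> PiE {..<k} (\<lambda>_. {0..N}). sum e1 {..<k} = sum e2 {..<k}}.
            x ^ sum e1 {..<k} * x ^ sum e2 {..<k}) \<le> 1 + ((\<Sum>b\<in>{0..N}. x ^ b) ^ k - 1) ^ 2"
proof -
  let ?D = "PiE {..<k} (\<lambda>_. {0..N})"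
  let ?B = "{(e1,e2) \<in> ?D \<times> ?D. sum e1 {..<k} = sum e2 {..<k}}"
  let ?f = "\<lambda>e. x ^ sum e {..<k}"
  define z where "z = (\<lambda>j\<in>{..<k}. (0::nat))"
  have zD: "z \<in> ?D" by (simp add: z_def)
  have finD: "finite ?D" by (auto intro!: finite_PiE)
  have zero: "e = z" if "e \<in> ?D" "sum e {..<k} = 0" for e
  proof (rule PiE_ext[OF that(1) zD])
    fix j assume "j \<in> {..<k}"
    then show "e j = z j" using that(2) by (simp add: z_def)
  qed
  have finB: "finite ?B" by (rule finite_subset[of _ "?D \<times> ?D"]) (use finD in \<open>auto simp del: PiE_iff\<close>)
  have zzB: "(z, z) \<in> ?B" using zD by simp
  have sub: "?B - {(z,z)} \<subseteq> (?D - {z}) \<times> (?D - {z})"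
  proof
    fix p assume p: "p \<in> ?B - {(z,z)}"
    obtain e1 e2 where p12: "p = (e1, e2)" by (cases p)
    have e: "e1 \<in> ?D" "e2 \<in> ?D" "sum e1 {..<k} = sum e2 {..<k}" "(e1, e2) \<noteq> (z, z)"
      using p unfolding p12 by simp_all
    have "e1 \<noteq> z"
    proof
      assume "e1 = z"
      then have "sum e2 {..<k} = 0" using e(3) by (simp add: z_def)
      then have "e2 = z" using zero e(2) by blast
      then show False using e(4) \<open>e1 = z\<close> by simp
    qed
    moreover have "e2 \<noteq> z"
    proof
      assume "e2 = z"
      then have "sum e1 {..<k} = 0" using e(3) by (simp add: z_def)
      then have "e1 = z" using zero e(1) by blast
      then show False using e(4) \<open>e2 = z\<close> by simp
    qed
    ultimately show "p \<in> (?D - {z}) \<times> (?D - {z})" using e(1,2) unfolding p12 by simp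
  qed
  have fz: "?f z = 1" by (simp add: z_def)
  have s1: "(\<Sum>(e1,e2)\<in>?B. ?f e1 * ?f e2) = ?f z * ?f z + (\<Sum>(e1,e2)\<in>?B - {(z,z)}. ?f e1 * ?f e2)"
    by (rule sum.remove[OF finB zzB, of "\<lambda>(e1,e2). ?f e1 * ?f e2", unfolded prod.case])
  have s2: "(\<Sum>(e1,e2)\<in>?B - {(z,z)}. ?f e1 * ?f e2) \<le> (\<Sum>(e1,e2)\<in>(?D - {z}) \<times> (?D - {z}). ?f e1 * ?f e2)"
  proof (rule sum_mono2[OF _ sub])
    show "finite ((?D - {z}) \<times> (?D - {z}))" using finD by simp
    show "\<And>b. b \<in> (?D - {z}) \<times> (?D - {z}) - (?B - {(z, z)}) \<Longrightarrow> 0 \<le> (case b of (e1, e2) \<Rightarrow> ?f e1 * ?f e2)"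
      using assms by (simp split: prod.splits)
  qed
  have s3: "(\<Sum>(e1,e2)\<in>(?D - {z}) \<times> (?D - {z}). ?f e1 * ?f e2) = (sum ?f (?D - {z})) ^ 2" by (rule sq_sum_prod)
  have s4: "sum ?f (?D - {z}) = sum ?f ?D - ?f z" using finD zD by (simp only: sum_diff1 if_True)
  have s5: "sum ?f ?D = (\<Sum>b\<in>{0..N}. x ^ b) ^ k" by (rule G_eq)
  show ?thesis using s1 s2 s3 s4 s5 fz by simp
qed



lemma sum_split_add: "(\<Sum>j<a+b. g j) = (\<Sum>j<a. g j) + (\<Sum>j<b. g (j + a))"
  for g :: "nat \<Rightarrow> 'a::comm_monoid_add"
  by (induction b) (auto simp: add.commute add.left_commute)

lemma sum_restrict_same: "sum (restrict f A) A = sum f A"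
  by (rule sum.cong) auto

lemma a_factor:
  fixes m N :: nat and \<rho> c :: real
  assumes m: "1 \<le> m" "m \<le> N"
  shows "\<rho> ^ bigOmega m * real m powr (-c) = (\<Prod>p\<in>{p. prime p \<and> p \<le> N}. (\<rho> * real p powr (-c)) ^ multiplicity p m)"
proof -
  define P where "P = {p::nat. prime p \<and> p \<le> N}"
  have P: "finite P" "\<And>p. p \<in> P \<Longrightarrow> prime p" unfolding P_def by auto
  have pf: "prime_factors m \<subseteq> P"
  proof
    fix p assume p: "p \<in> prime_factors m"
    then have "p \<le> m" using m by (intro dvd_imp_le) (auto simp: in_prime_factors_iff)
    then show "p \<in> P" using p m by (auto simp: P_def in_prime_factors_iff)
  qed
  have m0: "m > 0" using m by simp
  have pos: "\<And>p. p \<in> P \<Longrightarrow> p > 0" using P(2) prime_gt_0_nat by blast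
  have "\<rho> ^ bigOmega m = (\<Prod>p\<in>P. \<rho> ^ multiplicity p m)"
    using Omega_sum[OF m0 P(1) pf P(2)] by (simp add: power_sum)
  moreover have "real m powr (-c) = (\<Prod>p\<in>P. (real p powr (-c)) ^ multiplicity p m)"
    using prod_pow_powr[OF P(1) pos, of "-c" "\<lambda>p. multiplicity p m"] factor_repr[OF m0 P(1) pf P(2)]
    by simp
  ultimately have "\<rho> ^ bigOmega m * real m powr (-c) = (\<Prod>p\<in>P. \<rho> ^ multiplicity p m * (real p powr (-c)) ^ multiplicity p m)"
    by (simp add: prod.distrib)
  also have "\<dots> = (\<Prod>p\<in>P. (\<rho> * real p powr (-c)) ^ multiplicity p m)"
    by (simp add: power_mult_distrib)
  finally show ?thesis by (simp add: P_def)
qed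

lemma euler_tuple:
  fixes k N :: nat and \<rho> c :: real and T :: "(nat \<Rightarrow> nat) set"
  assumes T: "finite T" "T \<subseteq> tuples k" and N: "\<And>n j. n \<in> T \<Longrightarrow> j < 2*k \<Longrightarrow> n j \<le> N"
    and rho: "\<rho> \<ge> 0"
  shows "(\<Sum>n\<in>T. \<Prod>j<2*k. \<rho> ^ bigOmega (n j) * real (n j) powr (-c))
    \<le> (\<Prod>p\<in>{p. prime p \<and> p \<le> N}.
         \<Sum>(e1,e2)\<in>{(e1,e2) \<in> PiE {..<k} (\<lambda>_. {0..N}) \<times> PiE {..<k} (\<lambda>_. {0..N}). sum e1 {..<k} = sum e2 {..<k}}.
            (\<rho> * real p powr (-c)) ^ sum e1 {..<k} * (\<rho> * real p powr (-c)) ^ sum e2 {..<k})"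
    (is "_ \<le> (\<Prod>p\<in>_. \<Sum>(e1,e2)\<in>?B. ?H p e1 e2)")
proof -
  define P where "P = {p::nat. prime p \<and> p \<le> N}"
  have P: "finite P" "\<And>p. p \<in> P \<Longrightarrow> prime p" unfolding P_def by auto
  let ?D = "PiE {..<k} (\<lambda>_. {0..N})"
  let ?x = "\<lambda>p::nat. \<rho> * real p powr (-c)"
  define \<Phi> where "\<Phi> n = (\<lambda>p\<in>P. ((\<lambda>j\<in>{..<k}. multiplicity p (n j)), (\<lambda>j\<in>{..<k}. multiplicity p (n (j+k)))))"
    for n :: "nat \<Rightarrow> nat"
  have tup: "\<And>j. j < 2*k \<Longrightarrow> 1 \<le> n j" "\<And>j. j \<ge> 2*k \<Longrightarrow> n j = 0"
    "(\<Prod>j<k. n j) = (\<Prod>j\<in>{k..<2*k}. n j)" if "n \<in> T" for n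
    using that T(2) unfolding tuples_def by auto
  have step1: "(\<Prod>j<2*k. \<rho> ^ bigOmega (n j) * real (n j) powr (-c)) = (\<Prod>p\<in>P. case \<Phi> n p of (e1, e2) \<Rightarrow> ?H p e1 e2)"
    if n: "n \<in> T" for n
  proof -
    have "(\<Prod>j<2*k. \<rho> ^ bigOmega (n j) * real (n j) powr (-c)) = (\<Prod>j<2*k. \<Prod>p\<in>P. ?x p ^ multiplicity p (n j))"
      using a_factor tup(1)[OF n] N[OF n] unfolding P_def by (intro prod.cong) auto
    also have "\<dots> = (\<Prod>p\<in>P. \<Prod>j<2*k. ?x p ^ multiplicity p (n j))" by (rule prod.swap)
    also have "\<dots> = (\<Prod>p\<in>P. ?x p ^ (\<Sum>j<2*k. multiplicity p (n j)))" by (simp add: power_sum)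
    also have "\<dots> = (\<Prod>p\<in>P. case \<Phi> n p of (e1, e2) \<Rightarrow> ?H p e1 e2)"
    proof (rule prod.cong[OF refl])
      fix p assume p: "p \<in> P"
      have "(\<Sum>j<2*k. multiplicity p (n j)) = (\<Sum>j<k. multiplicity p (n j)) + (\<Sum>j<k. multiplicity p (n (j+k)))"
        using sum_split_add[where a=k and b=k and g="\<lambda>j. multiplicity p (n j)"] by (simp add: mult_2)
      then show "?x p ^ (\<Sum>j<2*k. multiplicity p (n j)) = (case \<Phi> n p of (e1, e2) \<Rightarrow> ?H p e1 e2)"
        using p by (simp add: \<Phi>_def sum_restrict_same power_add)
    qed
    finally show ?thesis .
  qed
  have step2: "\<Phi> n \<in> PiE P (\<lambda>_. ?B)" if n: "n \<in> T" for n
  proof -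
    have mN: "multiplicity p (n j) \<le> N" if "p \<in> P" "j < 2*k" for p j
      using mult_le_self[of "n j" p] tup(1)[OF n that(2)] N[OF n that(2)] P(2)[OF that(1)] by simp
    have bal: "(\<Sum>j<k. multiplicity p (n j)) = (\<Sum>j<k. multiplicity p (n (j+k)))" if p: "p \<in> P" for p
    proof -
      have pr: "prime_elem p" using P(2)[OF p] by simp
      have nz1: "0 \<notin> n ` {..<k}"
      proof
        assume "0 \<in> n ` {..<k}"
        then obtain j where "j < k" "n j = 0" by auto
        then show False using tup(1)[OF n, of j] by simp
      qed
      have nz2: "0 \<notin> n ` {k..<2*k}"
      proof
        assume "0 \<in> n ` {k..<2*k}"
        then obtain j where "j < 2*k" "n j = 0" by auto
        then show False using tup(1)[OF n, of j] by simp
      qed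
      have "(\<Sum>j<k. multiplicity p (n j)) = multiplicity p (\<Prod>j<k. n j)"
        using prime_elem_multiplicity_prod_distrib[OF pr nz1] by simp
      also have "\<dots> = multiplicity p (\<Prod>j\<in>{k..<2*k}. n j)" using tup(3)[OF n] by simp
      also have "\<dots> = (\<Sum>j\<in>{k..<2*k}. multiplicity p (n j))"
        using prime_elem_multiplicity_prod_distrib[OF pr nz2] by simp
      also have "\<dots> = (\<Sum>j\<in>{0+k..<k+k}. multiplicity p (n j))" by (simp add: mult_2)
      also have "\<dots> = (\<Sum>j\<in>{0..<k}. multiplicity p (n (j+k)))" by (rule sum.shift_bounds_nat_ivl)
      finally show ?thesis by (simp add: lessThan_atLeast0)
    qed
    show ?thesis
    proof (rule PiE_I)
      fix p assume p: "p \<in> P"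
      have r1: "(\<lambda>j\<in>{..<k}. multiplicity p (n j)) \<in> ?D"
        using mN[OF p] by (simp add: restrict_PiE_iff)
      have r2: "(\<lambda>j\<in>{..<k}. multiplicity p (n (j+k))) \<in> ?D"
        using mN[OF p] by (simp add: restrict_PiE_iff)
      have eqP: "\<Phi> n p = ((\<lambda>j\<in>{..<k}. multiplicity p (n j)), (\<lambda>j\<in>{..<k}. multiplicity p (n (j+k))))"
        using p by (simp add: \<Phi>_def)
      have eqs: "sum (\<lambda>j\<in>{..<k}. multiplicity p (n j)) {..<k} = sum (\<lambda>j\<in>{..<k}. multiplicity p (n (j+k))) {..<k}"
        using bal[OF p] by (simp only: sum_restrict_same)
      show "\<Phi> n p \<in> ?B" unfolding eqP mem_Collect_eq prod.case using r1 r2 eqs by blast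
    next
      fix p assume "p \<notin> P"
      then show "\<Phi> n p = undefined" by (simp add: \<Phi>_def)
    qed
  qed
  have step3: "inj_on \<Phi> T"
  proof (rule inj_onI)
    fix n n' assume n: "n \<in> T" and n': "n' \<in> T" and eq: "\<Phi> n = \<Phi> n'"
    have mp: "multiplicity p (n j) = multiplicity p (n' j)" if p: "p \<in> P" and j: "j < 2*k" for p j
    proof (cases "j < k")
      case True
      have "fst (\<Phi> n p) j = fst (\<Phi> n' p) j" using eq by simp
      then show ?thesis using p True by (simp add: \<Phi>_def)
    next
      case False
      have "snd (\<Phi> n p) (j - k) = snd (\<Phi> n' p) (j - k)" using eq by simp
      moreover have "j - k < k" "j - k + k = j" using False j by auto
      ultimately show ?thesis using p by (simp add: \<Phi>_def)
    qed
    show "n = n'"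
    proof
      fix j
      show "n j = n' j"
      proof (cases "j < 2*k")
        case True
        have pos: "n j > 0" "n' j > 0" using tup(1)[OF n True] tup(1)[OF n' True] by auto
        show ?thesis
        proof (rule multiplicity_eq_nat[OF pos])
          fix p :: nat assume pr: "prime p"
          show "multiplicity p (n j) = multiplicity p (n' j)"
          proof (cases "p \<le> N")
            case True
            then show ?thesis using mp[OF _ \<open>j < 2*k\<close>] pr by (simp add: P_def)
          next
            case False
            have "\<not> p dvd n j"
            proof
              assume "p dvd n j"
              then have "p \<le> n j" using pos(1) by (rule dvd_imp_le)
              then show False using N[OF n \<open>j < 2*k\<close>] False by simp
            qed
            moreover have "\<not> p dvd n' j"
            proof
              assume "p dvd n' j"
              then have "p \<le> n' j" using pos(2) by (rule dvd_imp_le)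
              then show False using N[OF n' \<open>j < 2*k\<close>] False by simp
            qed
            ultimately show ?thesis by (simp add: not_dvd_imp_multiplicity_0)
          qed
        qed
      next
        case False
        then show ?thesis using tup(2)[OF n] tup(2)[OF n'] by simp
      qed
    qed
  qed
  have finB: "finite ?B" by (rule finite_subset[of _ "?D \<times> ?D"]) (auto simp del: PiE_iff intro!: finite_PiE)
  have "(\<Sum>n\<in>T. \<Prod>j<2*k. \<rho> ^ bigOmega (n j) * real (n j) powr (-c))
      = (\<Sum>n\<in>T. \<Prod>p\<in>P. case \<Phi> n p of (e1, e2) \<Rightarrow> ?H p e1 e2)"
    using step1 by (rule sum.cong[OF refl])
  also have "\<dots> = (\<Sum>E\<in>\<Phi> ` T. \<Prod>p\<in>P. case E p of (e1, e2) \<Rightarrow> ?H p e1 e2)"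
    by (subst sum.reindex[OF step3]) (simp only: comp_def)
  also have "\<dots> \<le> (\<Sum>E\<in>PiE P (\<lambda>_. ?B). \<Prod>p\<in>P. case E p of (e1, e2) \<Rightarrow> ?H p e1 e2)"
  proof (rule sum_mono2)
    show "finite (PiE P (\<lambda>_. ?B))" using P(1) finB by (intro finite_PiE)
    show "\<Phi> ` T \<subseteq> PiE P (\<lambda>_. ?B)" by (rule image_subsetI) (rule step2)
    show "\<And>E. E \<in> PiE P (\<lambda>_. ?B) - \<Phi> ` T \<Longrightarrow> 0 \<le> (\<Prod>p\<in>P. case E p of (e1, e2) \<Rightarrow> ?H p e1 e2)"
      using rho by (intro prod_nonneg) (simp split: prod.splits)
  qed
  also have "\<dots> = (\<Prod>p\<in>P. \<Sum>b\<in>?B. case b of (e1, e2) \<Rightarrow> ?H p e1 e2)"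
    using P(1) finB by (subst prod_sum_PiE) auto
  finally show ?thesis by (simp add: P_def)
qed



lemma geom_le:
  assumes "0 \<le> (x::real)" "x < 1"
  shows "(\<Sum>b\<in>{0..N}. x ^ b) \<le> 1 / (1 - x)"
proof -
  have "(\<Sum>b\<in>{0..N}. x ^ b) = (\<Sum>b<Suc N. x ^ b)" by (simp add: atLeast0AtMost lessThan_Suc_atMost)
  also have "\<dots> = (1 - x ^ Suc N) / (1 - x)" by (subst sum_gp_strict) (use assms in auto)
  also have "\<dots> \<le> 1 / (1 - x)" using assms by (intro divide_right_mono) auto
  finally show ?thesis .
qed

lemma geom_ge1:
  assumes "0 \<le> (x::real)"
  shows "1 \<le> (\<Sum>b\<in>{0..N}. x ^ b)"
proof -
  have "(\<Sum>b\<in>{0..N}. x ^ b) = x ^ 0 + (\<Sum>b\<in>{0..N} - {0}. x ^ b)"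
    by (subst sum.remove[of _ 0]) auto
  moreover have "0 \<le> (\<Sum>b\<in>{0..N} - {0}. x ^ b)" using assms by (intro sum_nonneg) auto
  ultimately show ?thesis by simp
qed

lemma LB1:
  assumes "0 \<le> (x::real)" "x \<le> r" "r < 1"
  shows "((\<Sum>b\<in>{0..N}. x ^ b) ^ k) ^ 2 \<le> exp (2 * real k * x / (1 - r))"
proof -
  have x1: "x < 1" using assms by simp
  have "(\<Sum>b\<in>{0..N}. x ^ b) \<le> 1 / (1 - x)" by (rule geom_le[OF assms(1) x1])
  also have "1 / (1 - x) = 1 + x / (1 - x)" using x1 by (simp add: field_simps)
  also have "\<dots> \<le> exp (x / (1 - x))" by (rule exp_ge_add_one_self)
  also have "\<dots> \<le> exp (x / (1 - r))" using assms by (intro exp_mono divide_left_mono) auto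
  finally have g: "(\<Sum>b\<in>{0..N}. x ^ b) \<le> exp (x / (1 - r))" .
  have g0: "0 \<le> (\<Sum>b\<in>{0..N}. x ^ b)" using assms by (intro sum_nonneg) auto
  have "((\<Sum>b\<in>{0..N}. x ^ b) ^ k) ^ 2 = (\<Sum>b\<in>{0..N}. x ^ b) ^ (2 * k)" by (simp add: power_mult[symmetric] mult.commute)
  also have "\<dots> \<le> exp (x / (1 - r)) ^ (2 * k)" using g g0 by (intro power_mono) auto
  also have "\<dots> = exp (real (2 * k) * (x / (1 - r)))" by (subst exp_of_nat_mult) simp
  also have "\<dots> = exp (2 * real k * x / (1 - r))" by simp
  finally show ?thesis .
qed

lemma poly_aux:
  assumes "0 \<le> (t::real)" "t \<le> 1/2"
  shows "(t / (1 - t)) ^ 2 \<le> t ^ 2 + 6 * t ^ 3"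
proof -
  have t1: "0 < 1 - t" using assms by simp
  have "1 \<le> (1 + 6 * t) * (1 - t) ^ 2"
  proof -
    have "(1 + 6 * t) * (1 - t) ^ 2 = 1 + t * ((1 - 2*t) * (4 - 3 * t))"
      by (simp add: power2_eq_square algebra_simps)
    moreover have "0 \<le> t * ((1 - 2*t) * (4 - 3 * t))" using assms by (intro mult_nonneg_nonneg) auto
    ultimately show ?thesis by simp
  qed
  then have "t ^ 2 * 1 \<le> t ^ 2 * ((1 + 6 * t) * (1 - t) ^ 2)" by (intro mult_left_mono) auto
  then have "t ^ 2 / (1 - t) ^ 2 \<le> t ^ 2 * (1 + 6 * t)" using t1 by (simp add: divide_le_eq mult.assoc)
  then show ?thesis by (simp add: power_divide algebra_simps power3_eq_cube power2_eq_square)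
qed

lemma LB2:
  assumes "0 \<le> (x::real)" "real k * x \<le> 1/2" "k \<ge> 1"
  shows "1 + ((\<Sum>b\<in>{0..N}. x ^ b) ^ k - 1) ^ 2 \<le> exp ((real k * x) ^ 2 + 6 * (real k * x) ^ 3)"
proof -
  define t where "t = real k * x"
  define G where "G = (\<Sum>b\<in>{0..N}. x ^ b) ^ k"
  have t0: "0 \<le> t" using assms by (simp add: t_def)
  have th: "t \<le> 1/2" using assms by (simp add: t_def)
  have x1: "x < 1"
  proof -
    have "x \<le> real k * x" using assms by (simp add: mult_le_cancel_right1)
    then show ?thesis using assms by simp
  qed
  have G1: "1 \<le> G" unfolding G_def using geom_ge1[OF assms(1)] by (simp add: one_le_power)
  have "G \<le> (1 / (1 - x)) ^ k" unfolding G_def using geom_le[OF assms(1) x1] assms(1)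
    by (intro power_mono sum_nonneg) auto
  also have "\<dots> = 1 / (1 - x) ^ k" by (simp add: power_divide)
  also have "\<dots> \<le> 1 / (1 - t)"
  proof (rule divide_left_mono)
    have "1 + real k * (-x) \<le> (1 + (-x)) ^ k" using x1 assms by (intro Bernoulli_inequality) auto
    then show "1 - t \<le> (1 - x) ^ k" by (simp add: t_def)
    show "0 < (1 - x) ^ k * (1 - t)" using x1 th by simp
  qed simp
  finally have "G - 1 \<le> t / (1 - t)" using th by (simp add: field_simps)
  then have "(G - 1) ^ 2 \<le> (t / (1 - t)) ^ 2" using G1 by (intro power_mono) auto
  also have "\<dots> \<le> t ^ 2 + 6 * t ^ 3" by (rule poly_aux[OF t0 th])
  finally have "1 + (G - 1) ^ 2 \<le> 1 + (t ^ 2 + 6 * t ^ 3)" by simp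
  also have "\<dots> \<le> exp (t ^ 2 + 6 * t ^ 3)" by (rule exp_ge_add_one_self)
  finally show ?thesis by (simp add: G_def t_def)
qed



lemma ln2_ge_half: "1/2 \<le> ln (2::real)"
proof -
  have "exp (1/2::real) \<le> 1 + 1/2 + (1/2)^2" by (rule exp_bound) auto
  also have "\<dots> \<le> 2" by (simp add: power2_eq_square)
  finally have "exp (1/2::real) \<le> exp (ln 2)" by simp
  then show ?thesis by (simp only: exp_le_cancel_iff)
qed

lemma u_le_ln:
  assumes "0 \<le> (u::real)" "u \<le> 1"
  shows "u \<le> ln (\<Sum>a\<in>{0..2::nat}. u ^ a)"
proof -
  have e: "(\<Sum>a\<in>{0..2::nat}. u ^ a) = 1 + u + u^2" by (simp add: numeral_2_eq_2)
  have "exp u \<le> 1 + u + u^2" by (rule exp_bound[OF assms])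
  then have "ln (exp u) \<le> ln (1 + u + u^2)" using assms by (subst ln_le_cancel_iff) (auto intro: add_pos_nonneg)
  then show ?thesis using e by simp
qed

lemma finite_bound:
  fixes k :: nat and \<rho> \<sigma> \<delta> :: real and T :: "(nat \<Rightarrow> nat) set"
  assumes k: "2 \<le> k" and \<delta>: "\<delta> > 0" and \<rho>0: "0 \<le> \<rho>" and \<rho>\<delta>: "\<rho> \<le> sqrt (2 - \<delta>)"
    and \<sigma>: "0 < \<sigma>" "\<sigma> \<le> 1 / ln (real k)" and K: "exp 1 < (real k)\<^sup>2 * \<rho>\<^sup>2"
    and T: "finite T" "T \<subseteq> tuples k"
  shows "(\<Sum>n\<in>T. \<Prod>j<2*k. \<rho> ^ bigOmega (n j) * real (n j) powr (-(1/2 + \<sigma>)))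
    \<le> exp (- ((real k)\<^sup>2 * \<rho>\<^sup>2) * (ln (2 * \<sigma>) + ln (ln ((real k)\<^sup>2 * \<rho>\<^sup>2)) - (8 / (1 - sqrt ((2 - \<delta>) / 2)) + 26)))"
proof -
  define K where "K = (real k)\<^sup>2 * \<rho>\<^sup>2"
  define c where "c = 1/2 + \<sigma>"
  define s where "s = 1 + 2 * \<sigma>"
  define r where "r = sqrt ((2 - \<delta>) / 2)"
  define x where "x p = \<rho> * real p powr (-c)" for p :: nat
  define u where "u p = real p powr (-s)" for p :: nat
  have K1: "exp 1 < K" using K by (simp add: K_def)
  have Kpos: "K > 0" using K1 by (smt (verit) exp_gt_zero)
  have \<rho>pos: "\<rho> > 0" using Kpos \<rho>0 by (cases "\<rho> = 0") (auto simp: K_def)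
  have \<rho>sq: "\<rho>\<^sup>2 \<le> 2 - \<delta>"
  proof -
    have "0 < sqrt (2 - \<delta>)" using \<rho>pos \<rho>\<delta> by linarith
    then have "0 < 2 - \<delta>" by simp
    then have "\<rho>\<^sup>2 \<le> (sqrt (2 - \<delta>))\<^sup>2" using \<rho>0 \<rho>\<delta> by (intro power_mono) auto
    then show ?thesis using \<open>0 < 2 - \<delta>\<close> by simp
  qed
  have \<delta>2: "\<delta> < 2" using \<rho>sq \<rho>pos by (smt (verit) zero_less_power)
  have r0: "0 \<le> r" using \<delta>2 by (simp add: r_def)
  have r1: "r < 1" using \<delta> by (simp add: r_def)
  have sqK: "sqrt K = real k * \<rho>" using \<rho>0 by (simp add: K_def real_sqrt_mult)
  have lnk2: "ln 2 \<le> ln (real k)" using k by (subst ln_le_cancel_iff) auto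
  have lnk: "1/2 \<le> ln (real k)" using ln2_ge_half lnk2 by linarith
  have \<sigma>2: "\<sigma> \<le> 2"
  proof -
    have "1 / ln (real k) \<le> 1 / (1/2)" using lnk by (intro divide_left_mono) auto
    then show ?thesis using \<sigma>(2) by simp
  qed
  have K8: "4 * K \<le> real k ^ 5"
  proof -
    have "\<rho>\<^sup>2 \<le> 2" using \<rho>sq \<delta> by linarith
    then have "K \<le> (real k)\<^sup>2 * 2" unfolding K_def by (intro mult_left_mono) auto
    moreover have "(2::real) ^ 3 \<le> real k ^ 3" using k by (intro power_mono) auto
    ultimately have "4 * K \<le> real k ^ 3 * (real k)\<^sup>2" 
    proof -
      assume a: "K \<le> (real k)\<^sup>2 * 2" and b: "(2::real) ^ 3 \<le> real k ^ 3"
      have "4 * K \<le> 2 ^ 3 * (real k)\<^sup>2" using a by simp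
      also have "\<dots> \<le> real k ^ 3 * (real k)\<^sup>2" using b by (rule mult_right_mono) simp
      finally show ?thesis .
    qed
    also have "\<dots> = real k ^ 5" by (simp add: power_add[symmetric])
    finally show ?thesis .
  qed
  have \<sigma>ln: "\<sigma> * ln (4 * K) \<le> 5"
  proof -
    have "ln (4 * K) \<le> ln (real k ^ 5)" using K8 Kpos k by (subst ln_le_cancel_iff) auto
    also have "\<dots> = 5 * ln (real k)" using k by (simp add: ln_realpow)
    finally have a: "ln (4 * K) \<le> 5 * ln (real k)" .
    have lk: "0 < ln (real k)" using lnk by linarith
    have b: "\<sigma> * ln (real k) \<le> 1" using \<sigma>(2) lk by (simp add: le_divide_eq)
    have "\<sigma> * ln (4 * K) \<le> \<sigma> * (5 * ln (real k))" using a \<sigma>(1) by (intro mult_left_mono) auto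
    then show ?thesis using b by simp
  qed
  define N where "N = (\<Sum>n\<in>T. \<Sum>j<2*k. n j)"
  have Nb: "n j \<le> N" if "n \<in> T" "j < 2*k" for n j
  proof -
    have "n j \<le> (\<Sum>j<2*k. n j)" using that(2) by (intro member_le_sum) auto
    also have "\<dots> \<le> N" unfolding N_def using that(1) T(1) by (intro member_le_sum) auto
    finally show ?thesis .
  qed
  define P where "P = {p::nat. prime p \<and> p \<le> N}"
  have finP: "finite P" by (simp add: P_def)
  define L where "L p = (\<Sum>(e1,e2)\<in>{(e1,e2) \<in> PiE {..<k} (\<lambda>_. {0..N}) \<times> PiE {..<k} (\<lambda>_. {0..N}). sum e1 {..<k} = sum e2 {..<k}}.
            x p ^ sum e1 {..<k} * x p ^ sum e2 {..<k})" for p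
  have step0: "(\<Sum>n\<in>T. \<Prod>j<2*k. \<rho> ^ bigOmega (n j) * real (n j) powr (-(1/2 + \<sigma>))) \<le> (\<Prod>p\<in>P. L p)"
    unfolding L_def P_def x_def c_def using T Nb \<rho>0 by (intro euler_tuple[where N=N and k=k and T=T and \<rho>=\<rho> and c="1/2+\<sigma>"]) auto
  define M where "M = nat \<lfloor>4 * K\<rfloor>"
  have M1: "real M \<le> 4 * K" "4 * K < real M + 1"
  proof -
    have "real M = real_of_int \<lfloor>4 * K\<rfloor>" using Kpos by (simp add: M_def)
    then show "real M \<le> 4 * K" "4 * K < real M + 1" by linarith+
  qed
  have MK: "K \<le> real M"
  proof -
    have "1 < exp (1::real)" by simp
    then have "1 < K" using K1 by linarith
    then show ?thesis using M1 by linarith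
  qed
  define P1 where "P1 = {p \<in> P. p \<le> M}"
  define P2 where "P2 = {p \<in> P. M < p}"
  have xnn: "0 \<le> x p" for p using \<rho>0 by (simp add: x_def)
  have Lnn: "0 \<le> L p" for p
  proof -
    have "\<And>b. 0 \<le> (case b of (e1,e2) \<Rightarrow> x p ^ sum e1 {..<k} * x p ^ sum e2 {..<k})"
      using xnn[of p] by (simp split: prod.splits)
    then show ?thesis unfolding L_def by (intro sum_nonneg)
  qed
  have split: "(\<Prod>p\<in>P. L p) = (\<Prod>p\<in>P1. L p) * (\<Prod>p\<in>P2. L p)"
  proof -
    have "P = P1 \<union> P2" unfolding P1_def P2_def by auto
    moreover have "P1 \<inter> P2 = {}" unfolding P1_def P2_def by auto
    moreover have "finite P1" "finite P2" using finP unfolding P1_def P2_def by auto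
    ultimately show ?thesis by (simp add: prod.union_disjoint)
  qed
  have xle: "x p \<le> \<rho> / sqrt (real p)" if "p \<ge> 1" for p
  proof -
    have cc: "-c \<le> -(1/2)" using \<sigma>(1) by (simp add: c_def)
    have p1: "1 \<le> real p" using that by simp
    have "real p powr (-c) \<le> real p powr (-(1/2))" by (rule powr_mono[OF cc p1])
    also have "\<dots> = 1 / sqrt (real p)" by (subst powr_minus_divide) (simp add: powr_half_sqrt)
    finally have "real p powr (-c) \<le> 1 / sqrt (real p)" .
    then have "\<rho> * real p powr (-c) \<le> \<rho> * (1 / sqrt (real p))" using \<rho>0 by (rule mult_left_mono)
    then show ?thesis unfolding x_def by simp
  qed
  have L1: "L p \<le> ((\<Sum>b\<in>{0..N}. x p ^ b) ^ k) ^ 2" for p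
    unfolding L_def by (rule L_le1[OF xnn])
  have L2: "L p \<le> 1 + ((\<Sum>b\<in>{0..N}. x p ^ b) ^ k - 1) ^ 2" for p
    unfolding L_def by (rule L_le2[OF xnn])
  have part1: "(\<Prod>p\<in>P1. L p) \<le> exp (8 * K / (1 - r))"
  proof -
    have P1sub: "P1 \<subseteq> {1..M}" unfolding P1_def P_def using prime_ge_1_nat by auto
    have finP1: "finite P1" using finP unfolding P1_def by auto
    have xr: "x p \<le> r" if "p \<in> P1" for p
    proof -
      have p2: "2 \<le> p" using that prime_ge_2_nat unfolding P1_def P_def by auto
      have "x p \<le> \<rho> / sqrt (real p)" using xle p2 by simp
      also have "\<dots> \<le> \<rho> / sqrt 2" using p2 \<rho>0 by (intro divide_left_mono) auto
      also have "\<dots> = sqrt (\<rho>\<^sup>2 / 2)" using \<rho>0 by (simp add: real_sqrt_divide)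
      also have "\<dots> \<le> r" unfolding r_def using \<rho>sq by (intro real_sqrt_le_mono divide_right_mono) auto
      finally show ?thesis .
    qed
    have "(\<Prod>p\<in>P1. L p) \<le> (\<Prod>p\<in>P1. exp (2 * real k * x p / (1 - r)))"
    proof (rule prod_mono)
      fix p assume p: "p \<in> P1"
      show "0 \<le> L p \<and> L p \<le> exp (2 * real k * x p / (1 - r))"
        using Lnn[of p] L1[of p] LB1[OF xnn xr[OF p] r1, of N k] by simp
    qed
    also have "\<dots> = exp (\<Sum>p\<in>P1. 2 * real k * x p / (1 - r))" using finP1 by (simp add: exp_sum)
    also have "\<dots> \<le> exp (8 * K / (1 - r))"
    proof (rule exp_mono)
      have e1: "(\<Sum>p\<in>P1. 2 * real k * x p / (1 - r)) = (2 * real k / (1 - r)) * (\<Sum>p\<in>P1. x p)"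
        by (simp add: sum_distrib_left sum_divide_distrib)
      have e2: "(\<Sum>p\<in>P1. x p) \<le> \<rho> * (\<Sum>p\<in>P1. 1 / sqrt (real p))"
      proof -
        have "(\<Sum>p\<in>P1. x p) \<le> (\<Sum>p\<in>P1. \<rho> * (1 / sqrt (real p)))"
        proof (rule sum_mono)
          fix p assume "p \<in> P1"
          then have "p \<ge> 1" using P1sub by auto
          then show "x p \<le> \<rho> * (1 / sqrt (real p))" using xle[of p] by simp
        qed
        then show ?thesis by (simp add: sum_distrib_left)
      qed
      have e3: "(\<Sum>p\<in>P1. 1 / sqrt (real p)) \<le> (\<Sum>n\<in>{1..M}. 1 / sqrt (real n))"
        by (rule sum_mono2[OF _ P1sub]) auto
      have e4: "(\<Sum>n\<in>{1..M}. 1 / sqrt (real n)) \<le> 2 * sqrt (real M)" by (rule sqrt_sum_bound)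
      have e5: "sqrt (real M) \<le> sqrt (4 * K)" using M1 by simp
      have e6: "sqrt (4 * K) = 2 * (real k * \<rho>)" using sqK by (simp add: real_sqrt_mult)
      have "(\<Sum>p\<in>P1. x p) \<le> \<rho> * (4 * (real k * \<rho>))"
      proof -
        have "(\<Sum>p\<in>P1. 1 / sqrt (real p)) \<le> 4 * (real k * \<rho>)" using e3 e4 e5 e6 by linarith
        then have "\<rho> * (\<Sum>p\<in>P1. 1 / sqrt (real p)) \<le> \<rho> * (4 * (real k * \<rho>))"
          using \<rho>0 by (rule mult_left_mono)
        then show ?thesis using e2 by linarith
      qed
      then have "(2 * real k / (1 - r)) * (\<Sum>p\<in>P1. x p) \<le> (2 * real k / (1 - r)) * (\<rho> * (4 * (real k * \<rho>)))"
        using r1 by (intro mult_left_mono) auto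
      also have "(2 * real k / (1 - r)) * (\<rho> * (4 * (real k * \<rho>))) = 8 * K / (1 - r)"
        by (simp add: K_def power2_eq_square)
      finally show "(\<Sum>p\<in>P1. 2 * real k * x p / (1 - r)) \<le> 8 * K / (1 - r)" using e1 by simp
    qed
    finally show ?thesis .
  qed
  define Z where "Z = 1 + 1 / (s - 1)"
  define Hs where "Hs = (\<Sum>n\<in>{1..M}. real n powr (-s))"
  have s1: "s > 1" using \<sigma>(1) by (simp add: s_def)
  have K4: "1 < 4 * K"
  proof -
    have "1 < exp (1::real)" by simp
    then show ?thesis using K1 by linarith
  qed
  have lnK4: "0 < ln (4 * K)" using K4 by simp
  have Hs_lower: "exp (-10) * ln (4 * K) \<le> Hs"
  proof -
    have hterm: "(4 * K) powr (-2 * \<sigma>) * (1 / real n) \<le> real n powr (-s)" if n: "n \<in> {1..M}" for n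
    proof -
      have n0: "0 < real n" using n by simp
      have nK: "real n \<le> 4 * K" using n M1 by simp
      have "-s = -1 + (-2 * \<sigma>)" by (simp add: s_def)
      then have "real n powr (-s) = real n powr (-1) * real n powr (-2 * \<sigma>)"
        by (simp only: powr_add)
      also have "real n powr (-1) = 1 / real n" using n0 by (simp add: powr_neg_one)
      finally have eq: "real n powr (-s) = 1 / real n * real n powr (-2 * \<sigma>)" .
      have "(4 * K) powr (-2 * \<sigma>) \<le> real n powr (-2 * \<sigma>)"
        using n0 nK \<sigma>(1) by (intro powr_mono2') auto
      then have "(4 * K) powr (-2 * \<sigma>) * (1 / real n) \<le> real n powr (-2 * \<sigma>) * (1 / real n)"
        using n0 by (intro mult_right_mono) auto
      then show ?thesis using eq by (simp add: mult.commute)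
    qed
    have "(4 * K) powr (-2 * \<sigma>) * harm M = (\<Sum>n\<in>{1..M}. (4 * K) powr (-2 * \<sigma>) * (1 / real n))"
      by (simp add: harm_def sum_distrib_left divide_inverse)
    also have "\<dots> \<le> Hs" unfolding Hs_def using hterm by (rule sum_mono)
    finally have h1: "(4 * K) powr (-2 * \<sigma>) * harm M \<le> Hs" .
    have h2: "ln (4 * K) \<le> harm M"
    proof -
      have "ln (4 * K) \<le> ln (real M + 1)" using M1 K4 by (subst ln_le_cancel_iff) auto
      also have "\<dots> \<le> harm M" by (rule ln_le_harm)
      finally show ?thesis .
    qed
    have h3: "exp (-10) \<le> (4 * K) powr (-2 * \<sigma>)"
    proof -
      have "(4 * K) powr (-2 * \<sigma>) = exp (-2 * \<sigma> * ln (4 * K))" using Kpos by (simp add: powr_def)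
      moreover have "-10 \<le> -2 * \<sigma> * ln (4 * K)" using \<sigma>ln by simp
      ultimately show ?thesis by simp
    qed
    have "exp (-10) * ln (4 * K) \<le> (4 * K) powr (-2 * \<sigma>) * harm M"
      using h2 h3 lnK4 by (intro mult_mono) auto
    then show ?thesis using h1 by linarith
  qed
  have Hs_pos: "0 < Hs"
  proof -
    have "0 < exp (-10) * ln (4 * K)" using lnK4 by simp
    then show ?thesis using Hs_lower by linarith
  qed
  have finP2: "finite P2" using finP unfolding P2_def by auto
  have prodP2: "(\<Prod>p\<in>P2. \<Sum>a\<in>{0..2::nat}. u p ^ a) \<le> Z / Hs"
  proof -
    define Q1 where "Q1 = {p::nat. prime p \<and> p \<le> M}"
    define A where "A p = (if p \<le> M then M else 2)" for p :: nat
    have finQ1: "finite Q1" by (simp add: Q1_def)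
    have disj: "Q1 \<inter> P2 = {}" unfolding Q1_def P2_def by auto
    have prQ: "\<And>p. p \<in> Q1 \<union> P2 \<Longrightarrow> prime p" unfolding Q1_def P2_def P_def by auto
    have up: "(\<Prod>p\<in>Q1 \<union> P2. \<Sum>a\<in>{0..A p}. u p ^ a) \<le> Z"
      unfolding u_def Z_def using finQ1 finP2 prQ s1 by (intro euler_upper) auto
    have "(\<Prod>p\<in>Q1 \<union> P2. \<Sum>a\<in>{0..A p}. u p ^ a)
        = (\<Prod>p\<in>Q1. \<Sum>a\<in>{0..A p}. u p ^ a) * (\<Prod>p\<in>P2. \<Sum>a\<in>{0..A p}. u p ^ a)"
      using finQ1 finP2 disj by (rule prod.union_disjoint)
    also have "(\<Prod>p\<in>Q1. \<Sum>a\<in>{0..A p}. u p ^ a) = (\<Prod>p\<in>Q1. \<Sum>a\<in>{0..M}. u p ^ a)"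
      by (intro prod.cong refl) (simp add: A_def Q1_def)
    also have "(\<Prod>p\<in>P2. \<Sum>a\<in>{0..A p}. u p ^ a) = (\<Prod>p\<in>P2. \<Sum>a\<in>{0..2}. u p ^ a)"
      by (intro prod.cong refl) (simp add: A_def P2_def)
    finally have up2: "(\<Prod>p\<in>Q1. \<Sum>a\<in>{0..M}. u p ^ a) * (\<Prod>p\<in>P2. \<Sum>a\<in>{0..2::nat}. u p ^ a) \<le> Z"
      using up by simp
    have low: "Hs \<le> (\<Prod>p\<in>Q1. \<Sum>a\<in>{0..M}. u p ^ a)"
      unfolding Hs_def u_def Q1_def by (rule euler_lower) simp
    have nn: "0 \<le> (\<Prod>p\<in>P2. \<Sum>a\<in>{0..2::nat}. u p ^ a)"
      by (intro prod_nonneg sum_nonneg) (simp add: u_def)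
    have "Hs * (\<Prod>p\<in>P2. \<Sum>a\<in>{0..2::nat}. u p ^ a) \<le> Z"
      using mult_right_mono[OF low nn] up2 by linarith
    then show ?thesis using Hs_pos by (simp add: pos_le_divide_eq mult.commute)
  qed
  have part2: "(\<Prod>p\<in>P2. L p) \<le> exp (K * ln (Z / Hs) + 12 * K)"
  proof -
    define t where "t p = real k * x p" for p
    have P2p: "prime p" "M < p" if "p \<in> P2" for p using that unfolding P2_def P_def by auto
    have pK: "4 * K < real p" if "p \<in> P2" for p
    proof -
      have "real M + 1 \<le> real p" using P2p[OF that] by simp
      then show ?thesis using M1 by linarith
    qed
    have p0: "0 < real p" if "p \<in> P2" for p using pK[OF that] Kpos by linarith
    have t0: "0 \<le> t p" for p using xnn[of p] by (simp add: t_def)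
    have tsq: "(t p)\<^sup>2 = K * u p" if "p \<in> P2" for p
    proof -
      have e: "of_nat 2 * (-c) = -s" by (simp add: c_def s_def)
      have "(real p powr (-c))\<^sup>2 = real p powr (of_nat 2 * (-c))"
        using p0[OF that] by (intro powr_power) auto
      then have "(real p powr (-c))\<^sup>2 = real p powr (-s)" by (simp only: e)
      then show ?thesis by (simp add: t_def x_def K_def u_def power_mult_distrib)
    qed
    have u0: "0 \<le> u p" for p by (simp add: u_def)
    have ule: "u p \<le> 1 / real p" if "p \<in> P2" for p
    proof -
      have p1: "1 \<le> real p" using prime_ge_1_nat[OF P2p(1)[OF that]] by simp
      have "real p powr (-s) \<le> real p powr (-1)" using s1 by (intro powr_mono[OF _ p1]) auto
      then show ?thesis using p0[OF that] by (simp add: u_def powr_neg_one)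
    qed
    have tsq_le: "(t p)\<^sup>2 \<le> K / real p" if "p \<in> P2" for p
    proof -
      have "K * u p \<le> K * (1 / real p)" using ule[OF that] Kpos by (intro mult_left_mono) auto
      then show ?thesis using tsq[OF that] by simp
    qed
    have Kp: "K / real p < 1/4" if "p \<in> P2" for p
      using pK[OF that] p0[OF that] by (simp add: divide_less_eq)
    have th: "t p \<le> 1/2" if "p \<in> P2" for p
    proof (rule ccontr)
      assume "\<not> t p \<le> 1/2"
      then have "(1/2)\<^sup>2 < (t p)\<^sup>2" by (intro power_strict_mono) auto
      moreover have "(1/2::real)\<^sup>2 = 1/4" by (simp add: power2_eq_square)
      ultimately show False using tsq_le[OF that] Kp[OF that] by linarith
    qed
    have u1: "u p \<le> 1" if "p \<in> P2" for p
    proof -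
      have "1 / real p \<le> 1" using p0[OF that] prime_ge_1_nat[OF P2p(1)[OF that]] by simp
      then show ?thesis using ule[OF that] by linarith
    qed
    have tcube: "(t p) ^ 3 \<le> K * sqrt K * (1 / (real p * sqrt (real p)))" if "p \<in> P2" for p
    proof -
      have "t p = sqrt ((t p)\<^sup>2)" using t0[of p] by simp
      also have "\<dots> \<le> sqrt (K / real p)" using tsq_le[OF that] by (rule real_sqrt_le_mono)
      also have "\<dots> = sqrt K / sqrt (real p)" by (simp add: real_sqrt_divide)
      finally have a: "t p \<le> sqrt K / sqrt (real p)" .
      have "(t p) ^ 3 = (t p)\<^sup>2 * t p" by (simp add: power2_eq_square power3_eq_cube)
      also have "\<dots> \<le> (K / real p) * (sqrt K / sqrt (real p))"
        using tsq_le[OF that] a t0[of p] Kpos p0[OF that] by (intro mult_mono) auto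
      also have "\<dots> = K * sqrt K * (1 / (real p * sqrt (real p)))" by simp
      finally show ?thesis .
    qed
    have Lp: "L p \<le> exp (K * u p + 6 * (t p) ^ 3)" if "p \<in> P2" for p
    proof -
      have "L p \<le> exp ((t p)\<^sup>2 + 6 * (t p) ^ 3)"
        using L2[of p] LB2[OF xnn, of k p N] th[OF that] k unfolding t_def by simp
      then show ?thesis using tsq[OF that] by simp
    qed
    have "(\<Prod>p\<in>P2. L p) \<le> (\<Prod>p\<in>P2. exp (K * u p + 6 * (t p) ^ 3))"
      using Lnn Lp by (intro prod_mono) auto
    also have "\<dots> = exp (\<Sum>p\<in>P2. K * u p + 6 * (t p) ^ 3)" using finP2 by (simp add: exp_sum)
    also have "\<dots> \<le> exp (K * ln (Z / Hs) + 12 * K)"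
    proof (rule exp_mono)
      have sum_split: "(\<Sum>p\<in>P2. K * u p + 6 * (t p) ^ 3) = K * (\<Sum>p\<in>P2. u p) + 6 * (\<Sum>p\<in>P2. (t p) ^ 3)"
        by (simp add: sum.distrib sum_distrib_left)
      have su: "(\<Sum>p\<in>P2. u p) \<le> ln (Z / Hs)"
      proof -
        have "(\<Sum>p\<in>P2. u p) \<le> (\<Sum>p\<in>P2. ln (\<Sum>a\<in>{0..2::nat}. u p ^ a))"
          using u0 u1 u_le_ln by (intro sum_mono) auto
        also have "\<dots> = ln (\<Prod>p\<in>P2. \<Sum>a\<in>{0..2::nat}. u p ^ a)"
        proof (rule ln_prod[symmetric, OF finP2])
          fix p assume "p \<in> P2"
          have "1 \<le> (\<Sum>a\<in>{0..2::nat}. u p ^ a)" by (rule geom_ge1[OF u0])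
          then show "(\<Sum>a\<in>{0..2::nat}. u p ^ a) \<noteq> 0" by auto
        qed
        also have "\<dots> \<le> ln (Z / Hs)"
        proof (subst ln_le_cancel_iff)
          show "0 < (\<Prod>p\<in>P2. \<Sum>a\<in>{0..2::nat}. u p ^ a)"
          proof (rule prod_pos)
            fix p assume "p \<in> P2"
            have "1 \<le> (\<Sum>a\<in>{0..2::nat}. u p ^ a)" by (rule geom_ge1[OF u0])
            then show "0 < (\<Sum>a\<in>{0..2::nat}. u p ^ a)" by simp
          qed
          then show "0 < Z / Hs" using prodP2 by linarith
        qed (rule prodP2)
        finally show ?thesis .
      qed
      have st: "(\<Sum>p\<in>P2. (t p) ^ 3) \<le> 2 * K"
      proof -
        define N' where "N' = max M N"
        have M1': "1 \<le> M"
        proof -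
          have "1 < exp (1::real)" by simp
          then have "1 < real M" using MK K1 by linarith
          then show ?thesis by simp
        qed
        have P2sub: "P2 \<subseteq> {Suc M..N'}" unfolding P2_def P_def N'_def by auto
        have a1: "(\<Sum>p\<in>P2. (t p) ^ 3) \<le> (\<Sum>p\<in>P2. K * sqrt K * (1 / (real p * sqrt (real p))))"
          using tcube by (rule sum_mono)
        have a2: "(\<Sum>p\<in>P2. K * sqrt K * (1 / (real p * sqrt (real p)))) = K * sqrt K * (\<Sum>p\<in>P2. 1 / (real p * sqrt (real p)))"
          by (simp add: sum_distrib_left)
        have a3: "(\<Sum>p\<in>P2. 1 / (real p * sqrt (real p))) \<le> (\<Sum>n\<in>{Suc M..N'}. 1 / (real n * sqrt (real n)))"
          by (rule sum_mono2[OF _ P2sub]) auto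
        have a4: "(\<Sum>n\<in>{Suc M..N'}. 1 / (real n * sqrt (real n))) \<le> 2 / sqrt (real M) - 2 / sqrt (real N')"
          using M1' by (intro tail_bound) (auto simp: N'_def)
        have a5: "2 / sqrt (real M) - 2 / sqrt (real N') \<le> 2 / sqrt K"
        proof -
          have "2 / sqrt (real M) \<le> 2 / sqrt K" using MK Kpos by (intro divide_left_mono) auto
          moreover have "0 \<le> 2 / sqrt (real N')" by simp
          ultimately show ?thesis by linarith
        qed
        have "(\<Sum>p\<in>P2. 1 / (real p * sqrt (real p))) \<le> 2 / sqrt K" using a3 a4 a5 by linarith
        then have "K * sqrt K * (\<Sum>p\<in>P2. 1 / (real p * sqrt (real p))) \<le> K * sqrt K * (2 / sqrt K)"
          using Kpos by (intro mult_left_mono) auto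
        then have "(\<Sum>p\<in>P2. (t p) ^ 3) \<le> K * sqrt K * (2 / sqrt K)" using a1 a2 by linarith
        also have "\<dots> = 2 * K" using Kpos by simp
        finally show ?thesis .
      qed
      have "K * (\<Sum>p\<in>P2. u p) \<le> K * ln (Z / Hs)" using su Kpos by (intro mult_left_mono) auto
      then show "(\<Sum>p\<in>P2. K * u p + 6 * (t p) ^ 3) \<le> K * ln (Z / Hs) + 12 * K"
        using sum_split st by linarith
    qed
    finally show ?thesis .
  qed
  have lnZ: "ln Z \<le> 4 - ln (2 * \<sigma>)"
  proof -
    have "Z = (1 + 2 * \<sigma>) / (2 * \<sigma>)" using \<sigma>(1) by (simp add: Z_def s_def field_simps)
    then have "ln Z = ln (1 + 2 * \<sigma>) - ln (2 * \<sigma>)" using \<sigma>(1) by (simp add: ln_div)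
    moreover have "ln (1 + 2 * \<sigma>) \<le> 2 * \<sigma>" using \<sigma>(1) by (intro ln_add_one_self_le_self) auto
    ultimately show ?thesis using \<sigma>2 by linarith
  qed
  have lnHs: "ln (ln K) - 10 \<le> ln Hs"
  proof -
    have lnK: "1 < ln K" using K1 Kpos by (metis ln_exp ln_less_cancel_iff exp_gt_zero)
    have "ln K \<le> ln (4 * K)" using Kpos by (subst ln_le_cancel_iff) auto
    then have a: "ln (ln K) \<le> ln (ln (4 * K))" using lnK by (subst ln_le_cancel_iff) auto
    have "ln (exp (-10) * ln (4 * K)) \<le> ln Hs" using Hs_lower lnK4 Hs_pos by (subst ln_le_cancel_iff) auto
    moreover have "ln (exp (-10) * ln (4 * K)) = -10 + ln (ln (4 * K))" using lnK4 by (simp add: ln_mult)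
    ultimately show ?thesis using a by linarith
  qed
  have fin: "8 * K / (1 - r) + (K * ln (Z / Hs) + 12 * K)
     \<le> - K * (ln (2 * \<sigma>) + ln (ln K) - (8 / (1 - r) + 26))"
  proof -
    have "0 < 1 / (s - 1)" using s1 by simp
    then have Z0: "0 < Z" unfolding Z_def by linarith
    have "ln (Z / Hs) = ln Z - ln Hs" using Z0 Hs_pos by (simp add: ln_div)
    then have "ln (Z / Hs) \<le> 14 - ln (2 * \<sigma>) - ln (ln K)" using lnZ lnHs by linarith
    then have "K * ln (Z / Hs) \<le> K * (14 - ln (2 * \<sigma>) - ln (ln K))" using Kpos by (intro mult_left_mono) auto
    moreover have "8 * K / (1 - r) = K * (8 / (1 - r))" by simp
    ultimately show ?thesis by (simp add: algebra_simps)
  qed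
  have "(\<Sum>n\<in>T. \<Prod>j<2*k. \<rho> ^ bigOmega (n j) * real (n j) powr (-(1/2 + \<sigma>)))
       \<le> exp (8 * K / (1 - r)) * exp (K * ln (Z / Hs) + 12 * K)"
    using step0 split part1 part2 Lnn by (smt (verit) mult_mono prod_nonneg exp_gt_zero)
  also have "\<dots> = exp (8 * K / (1 - r) + (K * ln (Z / Hs) + 12 * K))" by (simp add: exp_add)
  also have "\<dots> \<le> exp (- K * (ln (2 * \<sigma>) + ln (ln K) - (8 / (1 - r) + 26)))" using fin by simp
  finally show ?thesis by (simp add: K_def r_def)
qed



theorem lemma1:
  fixes \<delta> :: real
  assumes "\<delta> > 0"
  shows "\<exists>C::real. \<forall>(k::nat) (\<rho>::real) (\<sigma>::real) (t::nat \<Rightarrow> real).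
     2 \<le> k \<and> 0 \<le> \<rho> \<and> \<rho> \<le> sqrt (2 - \<delta>) \<and> 0 < \<sigma> \<and> \<sigma> \<le> 1 / ln (real k) \<and>
     exp 1 < (real k)\<^sup>2 * \<rho>\<^sup>2 \<longrightarrow>
     norm (F k \<rho> (\<lambda>l. complex_of_real \<sigma> + \<i> * complex_of_real (t l)))
       \<le> exp (- ((real k)\<^sup>2 * \<rho>\<^sup>2) *
               (ln (2 * \<sigma>) + ln (ln ((real k)\<^sup>2 * \<rho>\<^sup>2)) - C))"
proof (intro exI allI impI)
  fix k :: nat and \<rho> \<sigma> :: real and t :: "nat \<Rightarrow> real"
  assume h: "2 \<le> k \<and> 0 \<le> \<rho> \<and> \<rho> \<le> sqrt (2 - \<delta>) \<and> 0 < \<sigma> \<and> \<sigma> \<le> 1 / ln (real k) \<and>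
     exp 1 < (real k)\<^sup>2 * \<rho>\<^sup>2"
  define C where "C = 8 / (1 - sqrt ((2 - \<delta>) / 2)) + 26"
  define B where "B = exp (- ((real k)\<^sup>2 * \<rho>\<^sup>2) * (ln (2 * \<sigma>) + ln (ln ((real k)\<^sup>2 * \<rho>\<^sup>2)) - C))"
  define s where "s = (\<lambda>l. complex_of_real \<sigma> + \<i> * complex_of_real (t l))"
  define f where "f n = (\<Prod>j<2*k. complex_of_real (\<rho> ^ bigOmega (n j)) / (of_nat (n j)) powr (1/2 + s j))"
    for n :: "nat \<Rightarrow> nat"
  have Fdef: "F k \<rho> s = infsum f (tuples k)" unfolding F_def f_def ..
  have normf: "norm (f n) = (\<Prod>j<2*k. \<rho> ^ bigOmega (n j) * real (n j) powr (-(1/2 + \<sigma>)))" for n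
  proof -
    have "norm (f n) = (\<Prod>j<2*k. norm (complex_of_real (\<rho> ^ bigOmega (n j)) / (of_nat (n j)) powr (1/2 + s j)))"
      by (simp add: f_def prod_norm)
    also have "\<dots> = (\<Prod>j<2*k. \<rho> ^ bigOmega (n j) * real (n j) powr (-(1/2 + \<sigma>)))"
    proof (rule prod.cong[OF refl])
      fix j
      have "norm ((of_nat (n j) :: complex) powr (1/2 + s j)) = Re (of_nat (n j)) powr Re (1/2 + s j)"
        by (rule norm_powr_real_powr) auto
      also have "\<dots> = real (n j) powr (1/2 + \<sigma>)" by (simp add: s_def)
      finally have a: "norm ((of_nat (n j) :: complex) powr (1/2 + s j)) = real (n j) powr (1/2 + \<sigma>)" .
      have b: "norm (complex_of_real (\<rho> ^ bigOmega (n j))) = \<rho> ^ bigOmega (n j)" using h by (simp add: norm_power)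
      show "norm (complex_of_real (\<rho> ^ bigOmega (n j)) / (of_nat (n j)) powr (1/2 + s j)) =
          \<rho> ^ bigOmega (n j) * real (n j) powr (-(1/2 + \<sigma>))"
        by (simp only: norm_divide a b powr_minus_divide) simp
    qed
    finally show ?thesis .
  qed
  have fin: "sum (\<lambda>n. norm (f n)) T \<le> B" if "finite T" "T \<subseteq> tuples k" for T
    unfolding normf B_def C_def using h assms that by (intro finite_bound) auto
  have B0: "0 \<le> B" by (simp add: B_def)
  show "norm (F k \<rho> (\<lambda>l. complex_of_real \<sigma> + \<i> * complex_of_real (t l))) \<le> B"
  proof (cases "f summable_on tuples k")
    case True
    then have abs: "(\<lambda>n. norm (f n)) summable_on tuples k" using summable_on_iff_abs_summable_on_complex by blast
    have "norm (infsum f (tuples k)) \<le> infsum (\<lambda>n. norm (f n)) (tuples k)"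
      by (rule norm_infsum_bound[OF abs])
    also have "\<dots> \<le> B" using abs fin by (intro infsum_le_finite_sums) auto
    finally show ?thesis using Fdef by (simp add: s_def)
  next
    case False
    then have "infsum f (tuples k) = 0" by (rule infsum_not_exists)
    then show ?thesis using Fdef B0 by (simp add: s_def)
  qed
qed


end
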